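(* Let $n\in\mathbb{N}$ be even and let $(\mathcal{A},\mathcal{B},\mathcal{C})$ be a triple of adversaries for the BB84 monogamy-of-entanglement game with identical basis with parameter $n$ that wins with probability $p_n$. Then there exist a quantum state $\rho_{012}$ and a pair of adversaries for the extended non-local game with parameter $n$ that win with the same probability $p_n$.
   Context: Let $\Theta_n=\{\theta\in\{0,1\}^n: |\theta|=n/2\}$ and $|x^\theta\rangle=\bigotimes_i H^{\theta_i}|x_i\rangle$. For $\theta\in\Theta_n$, $b\in\{0,1\}$ and $x\in\{0,1\}^n$ let $x_{T_b}=(x_i)_{i:\theta_i=b}$. BB84 game with identical basis, parameter $n$: the challenger samples uniform $x\in\{0,1\}^n$, $\theta\in\Theta_n$, sends $|x^\theta\rangle$ to $\mathcal{A}$; $\mathcal{A}$ sends the two parts of a bipartite state $\sigma_{12}$ to $\mathcal{B}$ and $\mathcal{C}$ (who then cannot communicate); the challenger samples a uniform bit $b$ and sends $(\theta,b)$ to both; $\mathcal{B},\mathcal{C}$ output $x_1,x_2$; they win if $x_1=x_2=x_{T_b}$. Extended non-local game, parameter $n$, between a challenger and two players $\mathcal{B}',\mathcal{C}'$: the players jointly prepare a state $\rho_{012}$ where $\rho_0$ is an $n$-qubit register, send register $0$ to the challenger, and keep registers $1$ and $2$ respectively; from then on they cannot communicate. The challenger samples uniform $\theta\in\Theta_n$ and $b\in\{0,1\}$, measures the $i$-th qubit of register $0$ in the computational basis if $\theta_i=0$ and in the Hadamard basis if $\theta_i=1$, obtaining $m\in\{0,1\}^n$, and sends $(\theta,b)$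 to both players. The players output $m_1,m_2$ and win if $m_1=m_2=m_{T_b}$. *)

theory Defs
  imports "Jordan_Normal_Form.Schur_Decomposition"
begin

(* Finite-dimensional quantum mechanics with complex matrices.
   Kets are column matrices (d x 1).  Bits: False = 0, True = 1. *)

definition kron :: "complex mat \<Rightarrow> complex mat \<Rightarrow> complex mat" where
  "kron A B = mat (dim_row A * dim_row B) (dim_col A * dim_col B)
     (\<lambda>(i,j). A $$ (i div dim_row B, j div dim_col B) * B $$ (i mod dim_row B, j mod dim_col B))"

definition mtrace :: "complex mat \<Rightarrow> complex" where
  "mtrace A = (\<Sum>i<dim_row A. A $$ (i,i))"

definition psd :: "complex mat \<Rightarrow> bool" where
  "psd A \<longleftrightarrow> dim_row A = dim_col A \<and>
     (\<forall>v \<in> carrier_vec (dim_row A).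
        conjugate v \<bullet> (A *\<^sub>v v) \<in> \<real> \<and> Re (conjugate v \<bullet> (A *\<^sub>v v)) \<ge> 0)"

definition density :: "nat \<Rightarrow> complex mat \<Rightarrow> bool" where
  "density d \<rho> \<longleftrightarrow> \<rho> \<in> carrier_mat d d \<and> psd \<rho> \<and> mtrace \<rho> = 1"

definition povm :: "nat \<Rightarrow> 'o set \<Rightarrow> ('o \<Rightarrow> complex mat) \<Rightarrow> bool" where
  "povm d Out M \<longleftrightarrow> finite Out \<and> (\<forall>a\<in>Out. M a \<in> carrier_mat d d \<and> psd (M a)) \<and>
     (\<forall>i<d. \<forall>j<d. (\<Sum>a\<in>Out. M a $$ (i,j)) = (1\<^sub>m d) $$ (i,j))"

definition kraus :: "nat \<Rightarrow> nat \<Rightarrow> complex mat list \<Rightarrow> bool" where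
  "kraus din dout Ks \<longleftrightarrow> (\<forall>K\<in>set Ks. K \<in> carrier_mat dout din) \<and>
     (\<forall>i<din. \<forall>j<din. (\<Sum>K\<leftarrow>Ks. (mat_adjoint K * K) $$ (i,j)) = (1\<^sub>m din) $$ (i,j))"

definition channel :: "nat \<Rightarrow> complex mat list \<Rightarrow> complex mat \<Rightarrow> complex mat" where
  "channel dout Ks \<rho> = mat dout dout (\<lambda>(i,j). (\<Sum>K\<leftarrow>Ks. (K * \<rho> * mat_adjoint K) $$ (i,j)))"

definition ket :: "bool \<Rightarrow> complex mat" where
  "ket x = mat 2 1 (\<lambda>(i,j). if i = (if x then 1 else 0) then 1 else 0)"

definition hadamard :: "complex mat" where
  "hadamard = mat 2 2 (\<lambda>(i,j). (if i = 1 \<and> j = 1 then -1 else 1) / complex_of_real (sqrt 2))"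

definition qubit :: "bool \<Rightarrow> bool \<Rightarrow> complex mat" where
  "qubit t x = (if t then hadamard * ket x else ket x)"

(* |x^theta> = tensor_i H^{theta_i} |x_i>, first qubit = most significant tensor factor *)
definition bb84_ket :: "bool list \<Rightarrow> bool list \<Rightarrow> complex mat" where
  "bb84_ket \<theta> x = foldr (\<lambda>(t, xi) M. kron (qubit t xi) M) (zip \<theta> x) (1\<^sub>m 1)"

definition proj :: "complex mat \<Rightarrow> complex mat" where
  "proj v = v * mat_adjoint v"

definition bitstrings :: "nat \<Rightarrow> bool list set" where
  "bitstrings n = {x. length x = n}"

definition Theta :: "nat \<Rightarrow> bool list set" where
  "Theta n = {\<theta>. length \<theta> = n \<and> length (filter id \<theta>) = n div 2}"

definition restr :: "bool list \<Rightarrow> bool list \<Rightarrow> bool \<Rightarrow> bool list" where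
  "restr x \<theta> b = map fst (filter (\<lambda>p. snd p = b) (zip x \<theta>))"

(* BB84 game with identical basis: A = channel with Kraus ops Ks from n qubits to
   registers 1 (dim d1) and 2 (dim d2); B, C = families of POVMs indexed by (theta,b). *)
definition win_bb84 :: "nat \<Rightarrow> nat \<Rightarrow> nat \<Rightarrow> complex mat list
     \<Rightarrow> (bool list \<Rightarrow> bool \<Rightarrow> bool list \<Rightarrow> complex mat)
     \<Rightarrow> (bool list \<Rightarrow> bool \<Rightarrow> bool list \<Rightarrow> complex mat) \<Rightarrow> real" where
  "win_bb84 n d1 d2 Ks B C =
     (\<Sum>x\<in>bitstrings n. \<Sum>\<theta>\<in>Theta n. \<Sum>b\<in>(UNIV::bool set).
        Re (mtrace (kron (B \<theta> b (restr x \<theta> b)) (C \<theta> b (restr x \<theta> b))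
                    * channel (d1 * d2) Ks (proj (bb84_ket \<theta> x)))))
     / (2 ^ n * real (card (Theta n)) * 2)"

(* Extended non-local game: state rho on registers 0 (n qubits), 1 (dim d1), 2 (dim d2). *)
definition win_ext :: "nat \<Rightarrow> nat \<Rightarrow> nat \<Rightarrow> complex mat
     \<Rightarrow> (bool list \<Rightarrow> bool \<Rightarrow> bool list \<Rightarrow> complex mat)
     \<Rightarrow> (bool list \<Rightarrow> bool \<Rightarrow> bool list \<Rightarrow> complex mat) \<Rightarrow> real" where
  "win_ext n d1 d2 \<rho> B C =
     (\<Sum>\<theta>\<in>Theta n. \<Sum>b\<in>(UNIV::bool set). \<Sum>m\<in>bitstrings n.
        Re (mtrace (kron (kron (proj (bb84_ket \<theta> m)) (B \<theta> b (restr m \<theta> b))) (C \<theta> b (restr m \<theta> b))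
                    * \<rho>)))
     / (real (card (Theta n)) * 2)"

end

theory Submission
  imports Defs
begin



lemma adj_dim[simp]: "dim_row (mat_adjoint K) = dim_col K" "dim_col (mat_adjoint K) = dim_row K"
  unfolding mat_adjoint_def by auto

lemma adj_index: "i < dim_col K \<Longrightarrow> j < dim_row K \<Longrightarrow> mat_adjoint K $$ (i,j) = cnj (K $$ (j,i))"
  unfolding mat_adjoint_def by (auto simp: mat_of_rows_def)

lemma kron_dim[simp]: "dim_row (kron A B) = dim_row A * dim_row B" "dim_col (kron A B) = dim_col A * dim_col B"
  unfolding kron_def by auto

lemma kron_index: "i < dim_row A * dim_row B \<Longrightarrow> j < dim_col A * dim_col B \<Longrightarrow>
  kron A B $$ (i,j) = A $$ (i div dim_row B, j div dim_col B) * B $$ (i mod dim_row B, j mod dim_col B)"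
  unfolding kron_def by auto

lemma mult_index: "i < dim_row A \<Longrightarrow> j < dim_col B \<Longrightarrow> dim_col A = dim_row B \<Longrightarrow>
   (A * B) $$ (i,j) = (\<Sum>t<dim_col A. A $$ (i,t) * B $$ (t,j))"
  by (auto simp: scalar_prod_def atLeast0LessThan intro!: sum.cong)

lemma sum_list_idx: "(\<Sum>K\<leftarrow>Ks. f K) = (\<Sum>k<length Ks. f (Ks ! k))"
proof -
  have "(\<Sum>K\<leftarrow>Ks. f K) = (\<Sum>k<length Ks. map f Ks ! k)"
    by (simp add: sum_list_sum_nth atLeast0LessThan)
  also have "... = (\<Sum>k<length Ks. f (Ks ! k))" by (intro sum.cong) auto
  finally show ?thesis .
qed

lemma sum_split: fixes N D :: nat shows "(\<Sum>r<N*D. f r :: 'a::comm_monoid_add) = (\<Sum>i<N. \<Sum>a<D. f (i*D + a))"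
proof (induction N arbitrary: f)
  case 0 show ?case by simp
next
  case (Suc N)
  have e: "{..<Suc N * D} = {..<N*D} \<union> {N*D..<N*D+D}" by auto
  have s: "(\<Sum>r\<in>{N*D..<N*D+D}. f r) = (\<Sum>a<D. f (N*D+a))"
    using sum.shift_bounds_nat_ivl[of f 0 "N*D" D] by (simp add: atLeast0LessThan add.commute)
  show ?case unfolding e by (subst sum.union_disjoint) (auto simp: s Suc)
qed

lemma divmod_facts:
  fixes i b c :: nat
  assumes "c > 0"
  shows "i div (b*c) = i div c div b" "i mod (b*c) div c = i div c mod b" "i mod (b*c) mod c = i mod c"
proof -
  show "i div (b*c) = i div c div b" using div_mult2_eq[of i c b] by (simp add: mult.commute)
  show "i mod (b*c) mod c = i mod c" by (simp add: mod_mod_cancel)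
  have "i mod (c*b) = c * (i div c mod b) + i mod c" by (rule mod_mult2_eq)
  then have "i mod (b*c) = c * (i div c mod b) + i mod c" by (simp add: mult.commute)
  then show "i mod (b*c) div c = i div c mod b" using assms by simp
qed

lemma kron_assoc:
  assumes "dim_row C > 0" "dim_col C > 0"
  shows "kron (kron P B) C = kron P (kron B C)"
proof (rule eq_matI)
  fix i j assume i: "i < dim_row (kron P (kron B C))" and j: "j < dim_col (kron P (kron B C))"
  have i1: "i < dim_row P * dim_row B * dim_row C" and j1: "j < dim_col P * dim_col B * dim_col C"
    using i j by (auto simp: mult.assoc)
  have i2: "i div dim_row C < dim_row P * dim_row B" using i1 assms
    by (simp add: less_mult_imp_div_less)
  have j2: "j div dim_col C < dim_col P * dim_col B" using j1 assms
    by (simp add: less_mult_imp_div_less)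
  have i3: "i mod (dim_row B * dim_row C) < dim_row B * dim_row C"
    using assms i1 by (metis mod_less_divisor mult_eq_0_iff neq0_conv not_less_zero)
  have j3: "j mod (dim_col B * dim_col C) < dim_col B * dim_col C"
    using assms j1 by (metis mod_less_divisor mult_eq_0_iff neq0_conv not_less_zero)
  show "kron (kron P B) C $$ (i, j) = kron P (kron B C) $$ (i, j)"
  proof -
    have "kron (kron P B) C $$ (i, j) = kron P B $$ (i div dim_row C, j div dim_col C) * C $$ (i mod dim_row C, j mod dim_col C)"
      using i1 j1 by (simp add: kron_index)
    also have "... = P $$ (i div dim_row C div dim_row B, j div dim_col C div dim_col B) * B $$ (i div dim_row C mod dim_row B, j div dim_col C mod dim_col B) * C $$ (i mod dim_row C, j mod dim_col C)"
      using i2 j2 by (simp add: kron_index)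
    finally have L: "kron (kron P B) C $$ (i, j) = P $$ (i div dim_row C div dim_row B, j div dim_col C div dim_col B) * B $$ (i div dim_row C mod dim_row B, j div dim_col C mod dim_col B) * C $$ (i mod dim_row C, j mod dim_col C)" .
    have "kron P (kron B C) $$ (i, j) = P $$ (i div (dim_row B * dim_row C), j div (dim_col B * dim_col C)) * kron B C $$ (i mod (dim_row B * dim_row C), j mod (dim_col B * dim_col C))"
      using i1 j1 by (simp add: kron_index mult.assoc)
    also have "... = P $$ (i div (dim_row B * dim_row C), j div (dim_col B * dim_col C)) * (B $$ (i mod (dim_row B * dim_row C) div dim_row C, j mod (dim_col B * dim_col C) div dim_col C) * C $$ (i mod (dim_row B * dim_row C) mod dim_row C, j mod (dim_col B * dim_col C) mod dim_col C))"
      using i3 j3 by (simp add: kron_index)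
    finally show ?thesis unfolding L divmod_facts[OF assms(1)] divmod_facts[OF assms(2)] by (simp add: mult.assoc)
  qed
qed auto




lemma idx: "i < N \<Longrightarrow> a < (D::nat) \<Longrightarrow> i*D+a < N*D \<and> (i*D+a) div D = i \<and> (i*D+a) mod D = a"
proof -
  assume i: "i < N" and a: "a < D"
  have "i*D + a < i*D + D" using a by simp
  also have "... = Suc i * D" by simp
  also have "... \<le> N * D" using i by (intro mult_right_mono) auto
  finally show ?thesis using a by simp
qed

definition rhoK :: "nat \<Rightarrow> nat \<Rightarrow> complex mat list \<Rightarrow> complex mat" where
 "rhoK N D Ks = mat (N*D) (N*D) (\<lambda>(r,s). (\<Sum>k<length Ks. (Ks!k) $$ (r mod D, r div D) * cnj ((Ks!k) $$ (s mod D, s div D))) / of_nat N)"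

lemma ext_side:
  assumes P: "P \<in> carrier_mat N N" and M: "M \<in> carrier_mat D D"
  shows "mtrace (kron P M * rhoK N D Ks) =
    (\<Sum>i<N. \<Sum>a<D. \<Sum>j<N. \<Sum>c<D. \<Sum>k<length Ks. P$$(i,j)*M$$(a,c)*((Ks!k)$$(c,j)*cnj((Ks!k)$$(a,i))))/ of_nat N"
proof -
  have "mtrace (kron P M * rhoK N D Ks) = (\<Sum>r<N*D. \<Sum>s<N*D. kron P M $$ (r,s) * rhoK N D Ks $$ (s,r))"
    unfolding mtrace_def using P M by (auto simp: scalar_prod_def atLeast0LessThan rhoK_def intro!: sum.cong)
  also have "... = (\<Sum>i<N. \<Sum>a<D. \<Sum>j<N. \<Sum>c<D. kron P M $$ (i*D+a,j*D+c) * rhoK N D Ks $$ (j*D+c,i*D+a))"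
    by (simp add: sum_split)
  also have "... = (\<Sum>i<N. \<Sum>a<D. \<Sum>j<N. \<Sum>c<D. P$$(i,j)*M$$(a,c) * ((\<Sum>k<length Ks. (Ks!k)$$(c,j)*cnj((Ks!k)$$(a,i))) / of_nat N))"
    using P M by (auto simp: idx kron_index rhoK_def intro!: sum.cong)
  also have "... = (\<Sum>i<N. \<Sum>a<D. \<Sum>j<N. \<Sum>c<D. \<Sum>k<length Ks. P$$(i,j)*M$$(a,c)*((Ks!k)$$(c,j)*cnj((Ks!k)$$(a,i))))/ of_nat N"
    by (simp add: sum_divide_distrib sum_distrib_left)
  finally show ?thesis .
qed

lemma KPK:
  assumes K: "K \<in> carrier_mat D N" and P: "P \<in> carrier_mat N N" and c: "c < D" and a: "a < D"
  shows "(K * P * mat_adjoint K) $$ (c,a) = (\<Sum>i<N. \<Sum>j<N. K$$(c,j) * P$$(j,i) * cnj (K$$(a,i)))"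
proof -
  have KP: "\<And>i. i<N \<Longrightarrow> (K*P)$$(c,i) = (\<Sum>j<N. K$$(c,j)*P$$(j,i))" using K P c by (subst mult_index) auto
  have AD: "\<And>i. i<N \<Longrightarrow> mat_adjoint K $$ (i,a) = cnj (K$$(a,i))" using adj_index K a by auto
  have "(K * P * mat_adjoint K) $$ (c,a) = (\<Sum>i<N. (K*P)$$(c,i) * mat_adjoint K $$ (i,a))"
    using K P c a by (subst mult_index) auto
  also have "... = (\<Sum>i<N. (\<Sum>j<N. K$$(c,j) * P$$(j,i)) * cnj (K$$(a,i)))"
    by (intro sum.cong refl) (simp only: KP AD lessThan_iff)
  finally show ?thesis by (simp add: sum_distrib_right)
qed

lemma chan_idx: "c<D \<Longrightarrow> a<D \<Longrightarrow> channel D Ks P $$ (c,a) = (\<Sum>k<length Ks. (Ks!k * P * mat_adjoint (Ks!k)) $$ (c,a))"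
  by (simp add: channel_def sum_list_idx)

lemma reorder: "(\<Sum>a\<in>A. \<Sum>c\<in>C. \<Sum>k\<in>K. \<Sum>i\<in>I. \<Sum>j\<in>J. f a c k i j) = (\<Sum>i\<in>I. \<Sum>a\<in>A. \<Sum>j\<in>J. \<Sum>c\<in>C. \<Sum>k\<in>K. f a c k i j)"
proof -
  have "(\<Sum>a\<in>A. \<Sum>c\<in>C. \<Sum>k\<in>K. \<Sum>i\<in>I. \<Sum>j\<in>J. f a c k i j) = (\<Sum>a\<in>A. \<Sum>c\<in>C. \<Sum>i\<in>I. \<Sum>k\<in>K. \<Sum>j\<in>J. f a c k i j)"
    by (rule sum.cong[OF refl], rule sum.cong[OF refl], rule sum.swap)
  also have "... = (\<Sum>a\<in>A. \<Sum>c\<in>C. \<Sum>i\<in>I. \<Sum>j\<in>J. \<Sum>k\<in>K. f a c k i j)"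
    by (rule sum.cong[OF refl], rule sum.cong[OF refl], rule sum.cong[OF refl], rule sum.swap)
  also have "... = (\<Sum>a\<in>A. \<Sum>i\<in>I. \<Sum>c\<in>C. \<Sum>j\<in>J. \<Sum>k\<in>K. f a c k i j)"
    by (rule sum.cong[OF refl], rule sum.swap)
  also have "... = (\<Sum>a\<in>A. \<Sum>i\<in>I. \<Sum>j\<in>J. \<Sum>c\<in>C. \<Sum>k\<in>K. f a c k i j)"
    by (rule sum.cong[OF refl], rule sum.cong[OF refl], rule sum.swap)
  also have "... = (\<Sum>i\<in>I. \<Sum>a\<in>A. \<Sum>j\<in>J. \<Sum>c\<in>C. \<Sum>k\<in>K. f a c k i j)"
    by (rule sum.swap)
  finally show ?thesis .
qed

lemma chan_side:
  assumes P: "P \<in> carrier_mat N N" and M: "M \<in> carrier_mat D D"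
   and Ks: "\<forall>K\<in>set Ks. K \<in> carrier_mat D N"
   and sym: "\<forall>i<N. \<forall>j<N. P$$(i,j) = P$$(j,i)"
  shows "mtrace (M * channel D Ks P) =
    (\<Sum>i<N. \<Sum>a<D. \<Sum>j<N. \<Sum>c<D. \<Sum>k<length Ks. P$$(i,j)*M$$(a,c)*((Ks!k)$$(c,j)*cnj((Ks!k)$$(a,i))))"
proof -
  have Kk: "\<And>k. k < length Ks \<Longrightarrow> Ks!k \<in> carrier_mat D N" using Ks by auto
  have "mtrace (M * channel D Ks P) = (\<Sum>a<D. \<Sum>c<D. M$$(a,c) * channel D Ks P $$ (c,a))"
    unfolding mtrace_def using M by (auto simp: scalar_prod_def atLeast0LessThan channel_def intro!: sum.cong)
  also have "... = (\<Sum>a<D. \<Sum>c<D. \<Sum>k<length Ks. \<Sum>i<N. \<Sum>j<N. M$$(a,c) * (Ks!k)$$(c,j) * P$$(j,i) * cnj ((Ks!k)$$(a,i)))"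
  proof (intro sum.cong refl)
    fix a c assume a: "a \<in> {..<D}" and c: "c \<in> {..<D}"
    have "channel D Ks P $$ (c,a) = (\<Sum>k<length Ks. (Ks!k * P * mat_adjoint (Ks!k)) $$ (c,a))"
      using a c by (simp add: chan_idx)
    also have "... = (\<Sum>k<length Ks. \<Sum>i<N. \<Sum>j<N. (Ks!k)$$(c,j) * P$$(j,i) * cnj((Ks!k)$$(a,i)))"
      using a c by (intro sum.cong refl) (rule KPK[OF Kk P], auto)
    finally show "M$$(a,c) * channel D Ks P $$ (c,a) = (\<Sum>k<length Ks. \<Sum>i<N. \<Sum>j<N. M$$(a,c) * (Ks!k)$$(c,j) * P$$(j,i) * cnj ((Ks!k)$$(a,i)))"
      by (simp add: sum_distrib_left mult.assoc)
  qed
  also have "... = (\<Sum>i<N. \<Sum>a<D. \<Sum>j<N. \<Sum>c<D. \<Sum>k<length Ks. M$$(a,c) * (Ks!k)$$(c,j) * P$$(j,i) * cnj ((Ks!k)$$(a,i)))"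
    by (rule reorder)
  also have "... = (\<Sum>i<N. \<Sum>a<D. \<Sum>j<N. \<Sum>c<D. \<Sum>k<length Ks. P$$(i,j)*M$$(a,c)*((Ks!k)$$(c,j)*cnj((Ks!k)$$(a,i))))"
    using sym by (intro sum.cong refl) (simp add: ac_simps)
  finally show ?thesis .
qed




lemma rho_trace:
  assumes kr: "kraus N D Ks" and N: "N > 0"
  shows "mtrace (rhoK N D Ks) = 1"
proof -
  have Kk: "\<And>k. k < length Ks \<Longrightarrow> Ks!k \<in> carrier_mat D N" using kr unfolding kraus_def by auto
  have one: "\<And>i. i < N \<Longrightarrow> (\<Sum>k<length Ks. \<Sum>a<D. (Ks!k)$$(a,i) * cnj ((Ks!k)$$(a,i))) = 1"
  proof -
    fix i assume i: "i < N"
    have "(\<Sum>K\<leftarrow>Ks. (mat_adjoint K * K) $$ (i,i)) = 1" using kr i unfolding kraus_def by auto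
    moreover have "(\<Sum>K\<leftarrow>Ks. (mat_adjoint K * K) $$ (i,i)) = (\<Sum>k<length Ks. \<Sum>a<D. (Ks!k)$$(a,i) * cnj ((Ks!k)$$(a,i)))"
      unfolding sum_list_idx
    proof (intro sum.cong refl)
      fix k assume k: "k \<in> {..<length Ks}"
      have "(mat_adjoint (Ks!k) * Ks!k) $$ (i,i) = (\<Sum>a<D. mat_adjoint (Ks!k) $$ (i,a) * (Ks!k) $$ (a,i))"
        using Kk[of k] k i by (subst mult_index) auto
      also have "... = (\<Sum>a<D. (Ks!k)$$(a,i) * cnj ((Ks!k)$$(a,i)))"
        using Kk[of k] k i by (intro sum.cong refl) (auto simp: adj_index)
      finally show "(mat_adjoint (Ks!k) * Ks!k) $$ (i,i) = (\<Sum>a<D. (Ks!k)$$(a,i) * cnj ((Ks!k)$$(a,i)))" .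
    qed
    ultimately show "(\<Sum>k<length Ks. \<Sum>a<D. (Ks!k)$$(a,i) * cnj ((Ks!k)$$(a,i))) = 1" by simp
  qed
  have "mtrace (rhoK N D Ks) = (\<Sum>r<N*D. rhoK N D Ks $$ (r,r))" by (simp add: mtrace_def rhoK_def)
  also have "... = (\<Sum>i<N. \<Sum>a<D. rhoK N D Ks $$ (i*D+a,i*D+a))" by (rule sum_split)
  also have "... = (\<Sum>i<N. \<Sum>a<D. (\<Sum>k<length Ks. (Ks!k)$$(a,i) * cnj ((Ks!k)$$(a,i))) / of_nat N)"
    by (intro sum.cong refl) (auto simp: rhoK_def idx)
  also have "... = (\<Sum>i<N. (\<Sum>k<length Ks. \<Sum>a<D. (Ks!k)$$(a,i) * cnj ((Ks!k)$$(a,i))) / of_nat N)"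
    by (intro sum.cong refl) (simp add: sum_divide_distrib[symmetric], rule sum.swap)
  also have "... = (\<Sum>i<N. 1 / of_nat N)" by (intro sum.cong refl) (simp add: one)
  also have "... = 1" using N by simp
  finally show ?thesis .
qed

lemma rho_psd: "psd (rhoK N D Ks)"
  unfolding psd_def
proof (intro conjI ballI)
  show "dim_row (rhoK N D Ks) = dim_col (rhoK N D Ks)" by (simp add: rhoK_def)
  fix v :: "complex vec" assume v: "v \<in> carrier_vec (dim_row (rhoK N D Ks))"
  hence vd: "dim_vec v = N*D" by (simp add: rhoK_def)
  define w where "w k r = (Ks!k) $$ (r mod D, r div D)" for k r
  define z where "z k = (\<Sum>r<N*D. cnj (v$r) * w k r)" for k
  have "conjugate v \<bullet> (rhoK N D Ks *\<^sub>v v) = (\<Sum>r<N*D. cnj (v$r) * (\<Sum>s<N*D. ((\<Sum>k<length Ks. w k r * cnj (w k s)) / of_nat N) * v$s))"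
    using vd by (auto simp: scalar_prod_def atLeast0LessThan rhoK_def w_def intro!: sum.cong)
  also have "... = (\<Sum>r<N*D. \<Sum>s<N*D. \<Sum>k<length Ks. cnj (v$r) * w k r * (cnj (w k s) * v$s)) / of_nat N"
    unfolding sum_divide_distrib sum_distrib_left sum_distrib_right
    by (intro sum.cong refl) (simp add: ac_simps)
  also have "... = (\<Sum>k<length Ks. \<Sum>r<N*D. \<Sum>s<N*D. cnj (v$r) * w k r * (cnj (w k s) * v$s)) / of_nat N"
  proof -
    have "(\<Sum>r<N*D. \<Sum>s<N*D. \<Sum>k<length Ks. cnj (v$r) * w k r * (cnj (w k s) * v$s)) =
          (\<Sum>r<N*D. \<Sum>k<length Ks. \<Sum>s<N*D. cnj (v$r) * w k r * (cnj (w k s) * v$s))"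
      by (rule sum.cong[OF refl], rule sum.swap)
    also have "... = (\<Sum>k<length Ks. \<Sum>r<N*D. \<Sum>s<N*D. cnj (v$r) * w k r * (cnj (w k s) * v$s))"
      by (rule sum.swap)
    finally show ?thesis by simp
  qed
  also have "... = (\<Sum>k<length Ks. z k * cnj (z k)) / of_nat N"
  proof -
    have zz: "\<And>k. z k * cnj (z k) = (\<Sum>r<N*D. \<Sum>s<N*D. cnj (v$r) * w k r * (cnj (w k s) * v$s))"
      unfolding z_def cnj_sum sum_product by (intro sum.cong refl) (simp add: ac_simps)
    show ?thesis by (simp only: zz)
  qed
  also have "... = complex_of_real ((\<Sum>k<length Ks. (Re (z k))\<^sup>2 + (Im (z k))\<^sup>2) / real N)"
    by (simp only: complex_mult_cnj of_real_sum of_real_divide of_real_of_nat_eq)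
  finally have eq: "conjugate v \<bullet> (rhoK N D Ks *\<^sub>v v) = complex_of_real ((\<Sum>k<length Ks. (Re (z k))\<^sup>2 + (Im (z k))\<^sup>2) / real N)" .
  show "conjugate v \<bullet> (rhoK N D Ks *\<^sub>v v) \<in> \<real>" unfolding eq by (rule Reals_of_real)
  show "Re (conjugate v \<bullet> (rhoK N D Ks *\<^sub>v v)) \<ge> 0" unfolding eq Re_complex_of_real by (intro divide_nonneg_nonneg sum_nonneg) auto
qed




definition realm :: "complex mat \<Rightarrow> bool" where
  "realm A \<longleftrightarrow> (\<forall>i<dim_row A. \<forall>j<dim_col A. A $$ (i,j) \<in> \<real>)"

lemma qubit_props: "qubit t x \<in> carrier_mat 2 1 \<and> realm (qubit t x)"
proof -
  have k: "ket x \<in> carrier_mat 2 1" by (simp add: ket_def)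
  have h: "hadamard \<in> carrier_mat 2 2" by (simp add: hadamard_def)
  have kr: "\<And>i j. i < 2 \<Longrightarrow> j < 1 \<Longrightarrow> ket x $$ (i,j) \<in> \<real>" by (simp add: ket_def)
  have hr: "\<And>i j. i < 2 \<Longrightarrow> j < 2 \<Longrightarrow> hadamard $$ (i,j) \<in> \<real>"
    by (simp add: hadamard_def)
  have hk: "(hadamard * ket x) $$ (i,j) \<in> \<real>" if ij: "i < 2" "j < 1" for i j
  proof -
    have "(hadamard * ket x) $$ (i,j) = (\<Sum>t<2. hadamard $$ (i,t) * ket x $$ (t,j))"
      using h k ij by (subst mult_index) auto
    also have "... \<in> \<real>" using ij by (intro sum_in_Reals Reals_mult hr kr) auto
    finally show ?thesis .
  qed
  have "realm (hadamard * ket x)"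
    unfolding realm_def using h k hk by auto
  moreover have "realm (ket x)" unfolding realm_def using kr k by auto
  ultimately show ?thesis using h k by (auto simp: qubit_def)
qed

lemma kron_realm:
  assumes "realm A" "realm B"
  shows "realm (kron A B)"
  unfolding realm_def
proof (intro allI impI)
  fix i j assume i: "i < dim_row (kron A B)" and j: "j < dim_col (kron A B)"
  have "dim_row B \<noteq> 0"
  proof
    assume "dim_row B = 0" with i show False by simp
  qed
  moreover have "dim_col B \<noteq> 0"
  proof
    assume "dim_col B = 0" with j show False by simp
  qed
  ultimately have rb: "dim_row B > 0" "dim_col B > 0" by auto
  have "i div dim_row B < dim_row A" "j div dim_col B < dim_col A"
    using i j by (auto simp: less_mult_imp_div_less)
  moreover have "i mod dim_row B < dim_row B" "j mod dim_col B < dim_col B" using rb by auto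
  ultimately show "kron A B $$ (i, j) \<in> \<real>"
    using i j assms unfolding realm_def by (auto simp: kron_index intro!: Reals_mult)
qed

lemma bb84_ket_props:
  "length \<theta> = length x \<Longrightarrow> bb84_ket \<theta> x \<in> carrier_mat (2 ^ length \<theta>) 1 \<and> realm (bb84_ket \<theta> x)"
proof (induction \<theta> arbitrary: x)
  case Nil
  then show ?case by (auto simp: bb84_ket_def realm_def)
next
  case (Cons t \<theta>)
  then obtain xi x' where x: "x = xi # x'" and l: "length \<theta> = length x'" by (cases x) auto
  have e: "bb84_ket (t # \<theta>) x = kron (qubit t xi) (bb84_ket \<theta> x')"
    by (simp add: bb84_ket_def x)
  show ?case unfolding e using Cons.IH[OF l] qubit_props[of t xi]
    by (auto simp: kron_realm)
qed

lemma proj_props: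
  assumes v: "v \<in> carrier_mat N 1" and r: "realm v"
  shows "proj v \<in> carrier_mat N N" "\<forall>i<N. \<forall>j<N. proj v $$ (i,j) = proj v $$ (j,i)"
proof -
  show "proj v \<in> carrier_mat N N" using v unfolding proj_def carrier_mat_def by simp
  have e: "\<And>i j. i < N \<Longrightarrow> j < N \<Longrightarrow> proj v $$ (i,j) = v $$ (i,0) * v $$ (j,0)"
  proof -
    fix i j assume i: "i < N" and j: "j < N"
    have "proj v $$ (i,j) = (\<Sum>t<1. v $$ (i,t) * mat_adjoint v $$ (t,j))"
      unfolding proj_def using v i j by (subst mult_index) auto
    also have "... = v $$ (i,0) * cnj (v $$ (j,0))" using v j by (simp add: adj_index)
    also have "cnj (v $$ (j,0)) = v $$ (j,0)" using r v j unfolding realm_def by (simp add: Reals_cnj_iff)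
    finally show "proj v $$ (i,j) = v $$ (i,0) * v $$ (j,0)" .
  qed
  show "\<forall>i<N. \<forall>j<N. proj v $$ (i,j) = proj v $$ (j,i)" using e by (simp add: mult.commute)
qed

lemma len_filter_zip: "length x = length \<theta> \<Longrightarrow>
   length (filter (\<lambda>p. snd p = b) (zip x \<theta>)) = length (filter (\<lambda>t. t = b) \<theta>)"
proof (induction \<theta> arbitrary: x)
  case Nil then show ?case by simp
next
  case (Cons t \<theta>)
  then obtain y x' where "x = y # x'" "length x' = length \<theta>" by (cases x) auto
  with Cons show ?case by auto
qed

lemma restr_len:
  assumes "even n" "\<theta> \<in> Theta n" "x \<in> bitstrings n"
  shows "restr x \<theta> b \<in> bitstrings (n div 2)"
proof -
  have l: "length \<theta> = n" "length (filter id \<theta>) = n div 2" "length x = n"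
    using assms by (auto simp: Theta_def bitstrings_def)
  have "length (restr x \<theta> b) = length (filter (\<lambda>t. t = b) \<theta>)"
    unfolding restr_def using l len_filter_zip[of x \<theta> b] by simp
  also have "... = n div 2"
  proof (cases b)
    case True
    then show ?thesis using l by (simp add: id_def)
  next
    case False
    have "length (filter id \<theta>) + length (filter (\<lambda>t. \<not> id t) \<theta>) = length \<theta>"
      by (rule sum_length_filter_compl)
    then show ?thesis using False l assms(1) by (auto simp: id_def elim!: evenE)
  qed
  finally show ?thesis by (simp add: bitstrings_def)
qed

lemma kraus_pos:
  assumes "kraus N D Ks" "N > 0"
  shows "D > 0"
proof (rule ccontr)
  assume "\<not> D > 0" hence D: "D = 0" by simp
  have "(\<Sum>K\<leftarrow>Ks. (mat_adjoint K * K) $$ (0,0)) = 1" using assms unfolding kraus_def by auto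
  moreover have "\<And>K. K \<in> set Ks \<Longrightarrow> (mat_adjoint K * K) $$ (0,0) = 0"
  proof -
    fix K assume "K \<in> set Ks"
    hence K: "K \<in> carrier_mat D N" using assms unfolding kraus_def by auto
    show "(mat_adjoint K * K) $$ (0,0) = 0" using K D assms(2) by (subst mult_index) auto
  qed
  ultimately show False by (simp add: sum_list_idx)
qed




theorem mainTheorem3:
  fixes n d1 d2 :: nat
    and Ks :: "complex mat list"
    and B C :: "bool list \<Rightarrow> bool \<Rightarrow> bool list \<Rightarrow> complex mat"
  assumes "even n"
    and "kraus (2 ^ n) (d1 * d2) Ks"
    and "\<forall>\<theta>\<in>Theta n. \<forall>b. povm d1 (bitstrings (n div 2)) (B \<theta> b)"
    and "\<forall>\<theta>\<in>Theta n. \<forall>b. povm d2 (bitstrings (n div 2)) (C \<theta> b)"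
  shows "\<exists>(e1::nat) (e2::nat) (\<rho>::complex mat) (B' :: bool list \<Rightarrow> bool \<Rightarrow> bool list \<Rightarrow> complex mat)
            (C' :: bool list \<Rightarrow> bool \<Rightarrow> bool list \<Rightarrow> complex mat).
           density (2 ^ n * e1 * e2) \<rho> \<and>
           (\<forall>\<theta>\<in>Theta n. \<forall>b. povm e1 (bitstrings (n div 2)) (B' \<theta> b)) \<and>
           (\<forall>\<theta>\<in>Theta n. \<forall>b. povm e2 (bitstrings (n div 2)) (C' \<theta> b)) \<and>
           win_ext n e1 e2 \<rho> B' C' = win_bb84 n d1 d2 Ks B C"
proof -
  define N where "N = (2::nat) ^ n"
  define D where "D = d1 * d2"
  have N: "N > 0" by (simp add: N_def)
  have kr: "kraus N D Ks" using assms(2) by (simp add: N_def D_def)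
  have D: "D > 0" by (rule kraus_pos[OF kr N])
  have d2: "d2 > 0" using D by (simp add: D_def)
  have Ksc: "\<forall>K\<in>set Ks. K \<in> carrier_mat D N" using kr by (simp add: kraus_def)
  define f where "f \<theta> b m = mtrace (kron (B \<theta> b (restr m \<theta> b)) (C \<theta> b (restr m \<theta> b)) * channel D Ks (proj (bb84_ket \<theta> m)))" for \<theta> b m
  have key: "mtrace (kron (kron (proj (bb84_ket \<theta> m)) (B \<theta> b (restr m \<theta> b))) (C \<theta> b (restr m \<theta> b)) * rhoK N D Ks) = f \<theta> b m / of_nat N"
    if th: "\<theta> \<in> Theta n" and m: "m \<in> bitstrings n" for \<theta> b m
  proof -
    have lm: "length \<theta> = length m" "length \<theta> = n" using th m unfolding Theta_def bitstrings_def by auto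
    have v: "bb84_ket \<theta> m \<in> carrier_mat N 1" "realm (bb84_ket \<theta> m)"
      using bb84_ket_props[OF lm(1)] unfolding lm(2) N_def by auto
    note P = proj_props[OF v]
    have r: "restr m \<theta> b \<in> bitstrings (n div 2)" by (rule restr_len[OF assms(1) th m])
    have pB: "povm d1 (bitstrings (n div 2)) (B \<theta> b)" using assms(3) th by blast
    have pC: "povm d2 (bitstrings (n div 2)) (C \<theta> b)" using assms(4) th by blast
    have Bm: "B \<theta> b (restr m \<theta> b) \<in> carrier_mat d1 d1" using pB r unfolding povm_def by blast
    have Cm: "C \<theta> b (restr m \<theta> b) \<in> carrier_mat d2 d2" using pC r unfolding povm_def by blast
    have M: "kron (B \<theta> b (restr m \<theta> b)) (C \<theta> b (restr m \<theta> b)) \<in> carrier_mat D D"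
      using Bm Cm unfolding D_def carrier_mat_def by simp
    have as: "kron (kron (proj (bb84_ket \<theta> m)) (B \<theta> b (restr m \<theta> b))) (C \<theta> b (restr m \<theta> b)) =
       kron (proj (bb84_ket \<theta> m)) (kron (B \<theta> b (restr m \<theta> b)) (C \<theta> b (restr m \<theta> b)))"
      using Cm d2 by (intro kron_assoc) auto
    show ?thesis unfolding as f_def ext_side[OF P(1) M, of Ks] chan_side[OF P(1) M Ksc P(2)] by (rule refl)
  qed
  have dens: "density (2 ^ n * d1 * d2) (rhoK N D Ks)"
    unfolding density_def using rho_psd[of N D Ks] rho_trace[OF kr N]
    by (auto simp: rhoK_def N_def D_def mult.assoc)
  have win: "win_ext n d1 d2 (rhoK N D Ks) B C = win_bb84 n d1 d2 Ks B C"
  proof -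
    have "win_ext n d1 d2 (rhoK N D Ks) B C =
      (\<Sum>\<theta>\<in>Theta n. \<Sum>b\<in>(UNIV::bool set). \<Sum>m\<in>bitstrings n. Re (f \<theta> b m) / real N) / (real (card (Theta n)) * 2)"
      unfolding win_ext_def D_def[symmetric]
      by (intro arg_cong[where f="\<lambda>x. x / (real (card (Theta n)) * 2)"] sum.cong refl) (simp add: key)
    also have "(\<Sum>\<theta>\<in>Theta n. \<Sum>b\<in>(UNIV::bool set). \<Sum>m\<in>bitstrings n. Re (f \<theta> b m) / real N) =
       (\<Sum>m\<in>bitstrings n. \<Sum>\<theta>\<in>Theta n. \<Sum>b\<in>(UNIV::bool set). Re (f \<theta> b m)) / real N"
    proof -
      have "(\<Sum>\<theta>\<in>Theta n. \<Sum>b\<in>(UNIV::bool set). \<Sum>m\<in>bitstrings n. Re (f \<theta> b m)) =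
            (\<Sum>\<theta>\<in>Theta n. \<Sum>m\<in>bitstrings n. \<Sum>b\<in>(UNIV::bool set). Re (f \<theta> b m))"
        by (rule sum.cong[OF refl], rule sum.swap)
      also have "... = (\<Sum>m\<in>bitstrings n. \<Sum>\<theta>\<in>Theta n. \<Sum>b\<in>(UNIV::bool set). Re (f \<theta> b m))"
        by (rule sum.swap)
      finally have e: "(\<Sum>\<theta>\<in>Theta n. \<Sum>b\<in>(UNIV::bool set). \<Sum>m\<in>bitstrings n. Re (f \<theta> b m)) = (\<Sum>m\<in>bitstrings n. \<Sum>\<theta>\<in>Theta n. \<Sum>b\<in>(UNIV::bool set). Re (f \<theta> b m))" .
      show ?thesis unfolding e[symmetric] by (simp add: sum_divide_distrib)
    qed
    also have "(\<Sum>m\<in>bitstrings n. \<Sum>\<theta>\<in>Theta n. \<Sum>b\<in>(UNIV::bool set). Re (f \<theta> b m)) / real N / (real (card (Theta n)) * 2)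
       = win_bb84 n d1 d2 Ks B C"
      unfolding win_bb84_def f_def D_def N_def by (simp add: mult.assoc)
    finally show ?thesis .
  qed
  show ?thesis
    apply (rule exI[of _ d1], rule exI[of _ d2], rule exI[of _ "rhoK N D Ks"], rule exI[of _ B], rule exI[of _ C])
    using dens win assms(3,4) by blast
qed


end
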